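(* Let $r$ be a parameter (an integer or an indeterminate), and let $F_r=(f_{n,k})_{n,k\ge 0}$ be the $f$-matrix of the ordinary Riordan array $H_r=\left(\frac{1}{1-x},\frac{x(1+rx)}{1-x}\right)$, i.e. $F_r=H_r\cdot \mathbf{B}$, where $\mathbf{B}=\left(\binom{n}{k}\right)_{n,k\ge0}$. Then the bivariate generating function of $F_r$ is $$\sum_{n,k\ge 0} f_{n,k}x^ny^k=\frac{1}{1-(y+2)x-r(y+1)x^2},$$ and the bivariate generating function of the reversal $\left(f_{n,n-k}\right)_{0\le k\le n}$ of $F_r$ is $$\sum_{n\ge 0}\sum_{k=0}^n f_{n,n-k}x^ny^k=\frac{1}{1-(2y+1)x-ry(y+1)x^2}.$$
   Context: An ordinary Riordan array $(g(x),f(x))$, where $g(x)=1+g_1x+g_2x^2+\cdots$ and $f(x)=x+f_2x^2+\cdots$ are formal power series, is the lower-triangular matrix $(a_{n,k})_{n,k\ge0}$ with $a_{n,k}=[x^n]g(x)f(x)^k$. The binomial matrix $\mathbf{B}=\left(\binom{n}{k}\right)_{n,k\ge0}$ equals the Riordan array $\left(\frac{1}{1-x},\frac{x}{1-x}\right)$. For a lower-triangular matrix $M$ (here a Pascal-like matrix, i.e. $a_{n,0}=a_{n,n}=1$ and $a_{n,n-k}=a_{n,k}$), its $f$-matrix is the matrix product $M\cdot\mathbf{B}$. The reversal of a lower-triangular matrix $(a_{n,k})$ is the matrix whose $(n,k)$ entry is $a_{n,n-k}$ for $0\le k\le n$ (and $0$ for $k>n$). The bivariate generating function of $(a_{n,k})$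 is $\sum_{n,k}a_{n,k}x^ny^k$. *)

theory Defs
  imports "HOL-Computational_Algebra.Computational_Algebra"
begin

definition riordan :: "'a::comm_ring_1 fps \<Rightarrow> 'a fps \<Rightarrow> nat \<Rightarrow> nat \<Rightarrow> 'a" where
  "riordan g f n k = fps_nth (g * f ^ k) n"

definition geom :: "'a::comm_ring_1 fps" where
  "geom = Abs_fps (\<lambda>n. 1)"

definition H :: "'a::comm_ring_1 \<Rightarrow> nat \<Rightarrow> nat \<Rightarrow> 'a" where
  "H r = riordan geom (fps_X * (1 + fps_const r * fps_X) * geom)"

text \<open>Product of lower-triangular matrices M and the binomial matrix B:
  (M B)(n,k) = sum over j <= n of M(n,j) * binom(j,k).\<close>
definition fmatrix :: "(nat \<Rightarrow> nat \<Rightarrow> 'a::comm_ring_1) \<Rightarrow> nat \<Rightarrow> nat \<Rightarrow> 'a" where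
  "fmatrix M n k = (\<Sum>j\<le>n. M n j * of_nat (j choose k))"

definition reversal :: "(nat \<Rightarrow> nat \<Rightarrow> 'a::zero) \<Rightarrow> nat \<Rightarrow> nat \<Rightarrow> 'a" where
  "reversal M n k = (if k \<le> n then M n (n - k) else 0)"

definition bgf :: "(nat \<Rightarrow> nat \<Rightarrow> 'a::comm_ring_1) \<Rightarrow> 'a poly fps" where
  "bgf M = Abs_fps (\<lambda>n. \<Sum>k\<le>n. monom (M n k) k)"

definition Y :: "'a::comm_ring_1 poly" where
  "Y = [:0, 1:]"

end

theory Submission
  imports Defs
begin

lemma Y1: "(Y::'a::comm_ring_1 poly) + 1 = [:1,1:]"
  by (simp add: Y_def one_pCons)

lemma coeff_Y1_power: "coeff (((Y::'a::comm_ring_1 poly) + 1)^j) i = of_nat (j choose i)"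
proof (cases "i \<le> j")
  case True then show ?thesis by (simp add: Y1 coeff_linear_poly_power)
next
  case False
  have "degree ([:1::'a,1:]^j) \<le> j"
    by (rule order.trans[OF degree_power_le]) simp
  then show ?thesis using False by (simp add: Y1 coeff_eq_0 binomial_eq_0)
qed

lemma Y_pow: "(Y::'a::comm_ring_1 poly)^e = monom 1 e"
  by (simp add: Y_def monom_altdef)

lemma coeff_mult_Ypow: "coeff (p * (Y::'a::comm_ring_1 poly)^e) i = (if e \<le> i then coeff p (i - e) else 0)"
  by (simp add: Y_pow mult.commute[of p] coeff_monom_mult)

definition W :: "'a::comm_ring_1 poly \<Rightarrow> 'a fps \<Rightarrow> 'a poly fps" where
  "W w a = Abs_fps (\<lambda>n. smult (a$n) (w^n))"

lemma W_nth: "W w a $ n = smult (a$n) (w^n)" by (simp add: W_def)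

lemma W_mult: "W w (a*b) = W w a * W w b"
proof (rule fps_ext)
  fix n
  have "W w (a*b) $ n = (\<Sum>i=0..n. smult (a$i * b$(n-i)) (w^n))"
    by (simp add: W_nth fps_mult_nth smult_sum)
  also have "\<dots> = (\<Sum>i=0..n. smult (a$i) (w^i) * smult (b$(n-i)) (w^(n-i)))"
    by (intro sum.cong refl) (simp add: mult.commute flip: power_add)
  finally show "W w (a*b) $ n = (W w a * W w b) $ n" by (simp add: fps_mult_nth W_nth)
qed

lemma W_add: "W w (a+b) = W w a + W w b"
  by (rule fps_ext) (simp add: W_nth smult_add_left)

lemma W_one: "W w 1 = 1"
  by (rule fps_ext) (simp add: W_nth)

lemma W_const: "W w (fps_const c) = fps_const [:c:]"
  by (rule fps_ext) (simp add: W_nth)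

lemma W_X: "W w fps_X = fps_const w * fps_X"
  by (rule fps_ext) (simp add: W_nth fps_X_def)

lemma W_power: "W w (a^j) = W w a ^ j"
  by (induction j) (simp_all add: W_one W_mult)

lemma W_geom: "W w geom * (1 - fps_const w * fps_X) = 1"
proof (rule fps_ext)
  fix n
  have e: "W w geom * (1 - fps_const w * fps_X) = W w geom - fps_X * (fps_const w * W w geom)"
    by (simp add: algebra_simps)
  show "(W w geom * (1 - fps_const w * fps_X)) $ n = (1::'a poly fps) $ n"
    unfolding e by (cases n) (simp_all add: W_nth geom_def)
qed

definition f0 :: "'a::comm_ring_1 \<Rightarrow> 'a fps" where
  "f0 r = fps_X * (1 + fps_const r * fps_X) * geom"

definition Q :: "'a::comm_ring_1 \<Rightarrow> 'a poly \<Rightarrow> 'a poly fps" where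
  "Q r w = fps_X * (1 + fps_const ([:r:]*w) * fps_X) * W w geom"

lemma H_f0: "H r m j = (geom * f0 r ^ j) $ m"
  by (simp add: H_def riordan_def f0_def)

lemma W_f0: "W w (f0 r) = fps_const w * Q r w"
proof -
  have "W w (1 + fps_const r * fps_X) = 1 + fps_const ([:r:]*w) * fps_X"
    by (simp add: W_add W_one W_mult W_const W_X mult.assoc flip: fps_const_mult)
  then show ?thesis by (simp add: f0_def Q_def W_mult W_X mult_ac)
qed

lemma H_zero: assumes "m < j" shows "H r m j = 0"
proof -
  have "geom * f0 r ^ j = fps_X ^ j * (geom * ((1 + fps_const r * fps_X) * geom) ^ j)"
    by (simp add: f0_def power_mult_distrib mult_ac)
  then show ?thesis using assms by (simp add: H_f0 fps_X_power_mult_nth)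
qed

lemma canc_pow:
  fixes w :: "'a::comm_ring_1"
  assumes canc: "\<And>p q. p * w = q * w \<Longrightarrow> p = q"
    and "p * w^j = q * w^j"
  shows "p = q"
  using assms(2)
proof (induction j arbitrary: p q)
  case 0 then show ?case by simp
next
  case (Suc j)
  have "(p * w^j) * w = (q * w^j) * w" using Suc.prems by (simp add: mult_ac)
  then have "p * w^j = q * w^j" by (rule canc)
  then show ?case by (rule Suc.IH)
qed

lemma main_coeff:
  assumes canc: "\<And>p q. p * w = q * w \<Longrightarrow> p = q"
  shows "(W w geom * Q r w ^ j) $ m = smult (H r m j) (w^(m-j))"
proof -
  have "W w (geom * f0 r ^ j) = (W w geom * Q r w ^ j) * fps_const (w^j)"
    by (simp add: W_mult W_power W_f0 power_mult_distrib mult_ac)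
  then have e: "(W w geom * Q r w ^ j) $ m * w^j = smult (H r m j) (w^m)"
    by (metis H_f0 W_nth fps_mult_right_const_nth)
  show ?thesis
  proof (cases "j \<le> m")
    case True
    then have "smult (H r m j) (w^m) = smult (H r m j) (w^(m-j)) * w^j"
      by (simp flip: power_add)
    then show ?thesis using e canc_pow[OF canc] by metis
  next
    case False
    then show ?thesis using e canc_pow[OF canc, where j=j and q=0] H_zero[of m j r] by simp
  qed
qed

definition T :: "nat \<Rightarrow> 'a::comm_ring_1 poly \<Rightarrow> 'a \<Rightarrow> 'a poly \<Rightarrow> 'a poly fps" where
  "T N c r w = W w geom * (\<Sum>j<N. (fps_const c * Q r w)^j)"

lemma T_nth:
  assumes canc: "\<And>p q. p * w = q * w \<Longrightarrow> p = q"
  shows "T N c r w $ m = (\<Sum>j<N. c^j * smult (H r m j) (w^(m-j)))"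
proof -
  have "T N c r w = (\<Sum>j<N. fps_const (c^j) * (W w geom * Q r w ^ j))"
    by (simp add: T_def sum_distrib_left power_mult_distrib mult_ac)
  then show ?thesis by (simp add: fps_sum_nth main_coeff[OF canc])
qed

lemma T_D:
  "T N c r w * ((1 - fps_const w * fps_X) - fps_const c * fps_X * (1 + fps_const ([:r:]*w) * fps_X))
    = 1 - (fps_const c * Q r w)^N"
proof -
  have q: "Q r w * (1 - fps_const w * fps_X) = fps_X * (1 + fps_const ([:r:]*w) * fps_X)"
    using W_geom[of w] by (simp add: Q_def mult.assoc)
  define D where "D = 1 - fps_const w * fps_X"
  define C where "C = fps_const c * Q r w"
  define S where "S = (\<Sum>j<N. C^j)"
  have "(1 - C) * D = D - fps_const c * (Q r w * D)"
    by (simp add: C_def algebra_simps)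
  also have "\<dots> = D - fps_const c * fps_X * (1 + fps_const ([:r:]*w) * fps_X)"
    by (simp only: q D_def mult.assoc)
  finally have dd: "D - fps_const c * fps_X * (1 + fps_const ([:r:]*w) * fps_X) = (1 - C) * D" by simp
  have "T N c r w * (D - fps_const c * fps_X * (1 + fps_const ([:r:]*w) * fps_X))
     = (W w geom * D) * ((1 - C) * S)"
    unfolding dd T_def C_def[symmetric] S_def[symmetric] by (simp only: ac_simps)
  then have "T N c r w * ((1 - fps_const w * fps_X) - fps_const c * fps_X * (1 + fps_const ([:r:]*w) * fps_X))
     = (W w geom * (1 - fps_const w * fps_X)) * ((1 - fps_const c * Q r w) * (\<Sum>j<N. (fps_const c * Q r w)^j))"
    by (simp only: D_def C_def S_def)
  also have "\<dots> = 1 - (fps_const c * Q r w)^N"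
    by (simp add: W_geom one_diff_power_eq)
  finally show ?thesis .
qed

lemma pow_vanish: "n < N \<Longrightarrow> ((fps_const c * Q r w)^N) $ n = 0"
proof -
  assume "n < N"
  have "(fps_const c * Q r w)^N = fps_X^N * (fps_const c * (1 + fps_const ([:r:]*w) * fps_X) * W w geom)^N"
    by (simp add: Q_def power_mult_distrib mult_ac)
  then show ?thesis using \<open>n < N\<close> by (simp add: fps_X_power_mult_nth)
qed

lemma final:
  assumes canc: "\<And>p q. p * w = q * w \<Longrightarrow> p = q"
    and A: "\<And>m. A $ m = (\<Sum>j\<le>m. c^j * smult (H r m j) (w^(m-j)))"
  shows "A * ((1 - fps_const w * fps_X) - fps_const c * fps_X * (1 + fps_const ([:r:]*w) * fps_X)) = 1"
    (is "A * ?D = 1")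
proof (rule fps_ext)
  fix n
  let ?N = "Suc n"
  have AT: "A $ i = T ?N c r w $ i" if "i \<le> n" for i
  proof -
    have "(\<Sum>j<?N. c^j * smult (H r i j) (w^(i-j))) = (\<Sum>j\<le>i. c^j * smult (H r i j) (w^(i-j)))"
      by (rule sum.mono_neutral_right) (use that in \<open>auto simp: H_zero\<close>)
    then show ?thesis by (simp add: A T_nth[OF canc])
  qed
  have "(A * ?D) $ n = (T ?N c r w * ?D) $ n"
    unfolding fps_mult_nth by (intro sum.cong refl) (simp add: AT)
  also have "\<dots> = (1::'a poly fps) $ n"
    by (simp only: T_D fps_sub_nth pow_vanish[of n "Suc n"]) simp
  finally show "(A * ?D) $ n = (1::'a poly fps) $ n" .
qed

lemma canc_one: "p * (1::'a::comm_ring_1 poly) = q * 1 \<Longrightarrow> p = q" by simp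

lemma canc_Y: "p * (Y::'a::comm_ring_1 poly) = q * Y \<Longrightarrow> p = q"
proof (rule poly_eqI)
  fix i assume h: "p * Y = q * Y"
  have "coeff (p * Y^1) (Suc i) = coeff (q * Y^1) (Suc i)" using h by simp
  then show "coeff p i = coeff q i" by (simp only: coeff_mult_Ypow) simp
qed

lemma coeff_term: "coeff (((Y::'a::comm_ring_1 poly) + 1)^j * smult h (Y^e)) i
   = h * (if e \<le> i then of_nat (j choose (i - e)) else 0)"
  by (simp add: mult_smult_right coeff_mult_Ypow coeff_Y1_power)

lemma bgf_nth: "bgf M $ m = (\<Sum>k\<le>m. monom (M m k) k)"
  by (simp add: bgf_def)

lemma coeff_bgf: "coeff (bgf M $ m) i = (if i \<le> m then M m i else 0)"
  by (simp add: bgf_nth coeff_sum coeff_monom)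

lemma part1_nth: "bgf (fmatrix (H r)) $ m
   = (\<Sum>j\<le>m. (Y+1)^j * smult (H r m j) ((1::'a::comm_ring_1 poly)^(m-j)))"
proof (rule poly_eqI)
  fix i
  show "coeff (bgf (fmatrix (H r)) $ m) i = coeff (\<Sum>j\<le>m. (Y+1)^j * smult (H r m j) ((1::'a poly)^(m-j))) i"
  proof (cases "i \<le> m")
    case True
    then show ?thesis
      using coeff_term[of _ "H r m _" 0 i]
      by (simp add: coeff_bgf fmatrix_def coeff_sum mult.commute)
  next
    case False
    then show ?thesis
      using coeff_term[of _ "H r m _" 0 i]
      by (simp add: coeff_bgf fmatrix_def coeff_sum binomial_eq_0)
  qed
qed

lemma part2_nth: "bgf (reversal (fmatrix (H r))) $ m
   = (\<Sum>j\<le>m. (Y+1)^j * smult (H r m j) ((Y::'a::comm_ring_1 poly)^(m-j)))"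
proof (rule poly_eqI)
  fix i
  have "coeff (\<Sum>j\<le>m. (Y+1)^j * smult (H r m j) ((Y::'a poly)^(m-j))) i
     = (\<Sum>j\<le>m. H r m j * (if m - j \<le> i then of_nat (j choose (i - (m - j))) else 0))"
    by (simp only: coeff_sum coeff_term)
  also have "\<dots> = (if i \<le> m then (\<Sum>j\<le>m. H r m j * of_nat (j choose (m - i))) else 0)"
  proof (cases "i \<le> m")
    case True
    have "H r m j * (if m - j \<le> i then of_nat (j choose (i - (m - j))) else 0)
        = H r m j * of_nat (j choose (m - i))" if "j \<le> m" for j
    proof (cases "m - j \<le> i")
      case c: True
      have "j choose (i - (m - j)) = j choose (j - (i - (m - j)))"
        by (rule binomial_symmetric) (use c True that in linarith)
      also have "j - (i - (m - j)) = m - i" using c True that by linarith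
      finally show ?thesis using c by simp
    next
      case False
      then show ?thesis by (simp add: binomial_eq_0)
    qed
    then show ?thesis using True by simp
  next
    case False
    then show ?thesis by (simp, intro sum.neutral ballI) (simp add: binomial_eq_0)
  qed
  also have "\<dots> = coeff (bgf (reversal (fmatrix (H r))) $ m) i"
    by (simp add: coeff_bgf reversal_def fmatrix_def)
  finally show "coeff (bgf (reversal (fmatrix (H r))) $ m) i
     = coeff (\<Sum>j\<le>m. (Y+1)^j * smult (H r m j) ((Y::'a poly)^(m-j))) i" by simp
qed

theorem proposition2:
  fixes r :: "'a::comm_ring_1"
  shows "bgf (fmatrix (H r)) *
           (1 - fps_const (Y + 2) * fps_X - fps_const ([:r:] * (Y + 1)) * fps_X ^ 2) = 1 \<and>
         bgf (reversal (fmatrix (H r))) *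
           (1 - fps_const (2 * Y + 1) * fps_X - fps_const ([:r:] * Y * (Y + 1)) * fps_X ^ 2) = 1"
proof
  have d1: "(1 - fps_const (Y + 2) * fps_X - fps_const ([:r:] * (Y + 1)) * fps_X ^ 2)
     = (1 - fps_const 1 * fps_X) - fps_const (Y+1) * fps_X * (1 + fps_const ([:r:]*1) * fps_X)"
    by (simp add: algebra_simps power2_eq_square)
  show "bgf (fmatrix (H r)) *
           (1 - fps_const (Y + 2) * fps_X - fps_const ([:r:] * (Y + 1)) * fps_X ^ 2) = 1"
    unfolding d1 by (rule final[OF canc_one part1_nth])
  have d2: "(1 - fps_const (2 * Y + 1) * fps_X - fps_const ([:r:] * Y * (Y + 1)) * fps_X ^ 2)
     = (1 - fps_const Y * fps_X) - fps_const (Y+1) * fps_X * (1 + fps_const ([:r:]*Y) * fps_X)"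
    by (simp add: algebra_simps power2_eq_square)
  show "bgf (reversal (fmatrix (H r))) *
           (1 - fps_const (2 * Y + 1) * fps_X - fps_const ([:r:] * Y * (Y + 1)) * fps_X ^ 2) = 1"
    unfolding d2 by (rule final[OF canc_Y part2_nth])
qed

end
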